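(* For every group $G$ and every ring $k$, the set $D^1(k[G])$ with its addition and multiplication is a ring with unit $(1_G,0)$ and zero element $(0,0)$.
   Context: For a ring $k$ and group $G$, $k[G]$ is the group ring, and $(k[G])[G]$ is the set of finitely supported maps $\beta\colon G\to k[G]$, $g\mapsto\beta(g)$, with $\beta(g)(h)\in k$. $D^1(k[G])=k[G]\times(k[G])[G]$ with componentwise addition and multiplication $(\alpha_1,\beta_1)*(\alpha_2,\beta_2)=(\alpha_1\alpha_2,\ \alpha_1\beta_2+\beta_1\alpha_2+\beta_1\beta_2)$, where $\alpha_1\alpha_2$ is the group ring product and, for $\alpha\in k[G]$, $\beta,\gamma\in(k[G])[G]$, $g,h\in G$: $(\alpha\beta)(g)(h)=\sum_{t\in G}\alpha(t)\beta(gt)(t^{-1}h)$, $(\beta\alpha)(g)(h)=\sum_{t\in G}\beta(g)(t)\alpha(t^{-1}h)$, $(\beta\gamma)(g)(h)=\sum_{t\in G}\beta(g)(t)\gamma(gt)(t^{-1}h)$. *)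

theory Defs
  imports "HOL-Algebra.Ring" "HOL-Algebra.Group"
begin

text \<open>This renders the
  formally infinite sums over t in G, whose summands have finite support.\<close>
definition fs_sum :: "('k, 'c) ring_scheme \<Rightarrow> 'g set \<Rightarrow> ('g \<Rightarrow> 'k) \<Rightarrow> 'k" where
  "fs_sum k A f = finsum k f {x \<in> A. f x \<noteq> \<zero>\<^bsub>k\<^esub>}"

definition grp_ring_carrier :: "('g, 'b) monoid_scheme \<Rightarrow> ('k, 'c) ring_scheme \<Rightarrow> ('g \<Rightarrow> 'k) set" where
  "grp_ring_carrier G k = {\<alpha>. (\<forall>x\<in>carrier G. \<alpha> x \<in> carrier k)
      \<and> (\<forall>x. x \<notin> carrier G \<longrightarrow> \<alpha> x = \<zero>\<^bsub>k\<^esub>)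
      \<and> finite {x \<in> carrier G. \<alpha> x \<noteq> \<zero>\<^bsub>k\<^esub>}}"

definition gr_zero :: "('g, 'b) monoid_scheme \<Rightarrow> ('k, 'c) ring_scheme \<Rightarrow> 'g \<Rightarrow> 'k" where
  "gr_zero G k = (\<lambda>x. \<zero>\<^bsub>k\<^esub>)"

definition gr_one :: "('g, 'b) monoid_scheme \<Rightarrow> ('k, 'c) ring_scheme \<Rightarrow> 'g \<Rightarrow> 'k" where
  "gr_one G k = (\<lambda>x. if x = \<one>\<^bsub>G\<^esub> then \<one>\<^bsub>k\<^esub> else \<zero>\<^bsub>k\<^esub>)"

definition gr_add :: "('g, 'b) monoid_scheme \<Rightarrow> ('k, 'c) ring_scheme \<Rightarrow> ('g \<Rightarrow> 'k) \<Rightarrow> ('g \<Rightarrow> 'k) \<Rightarrow> 'g \<Rightarrow> 'k" where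
  "gr_add G k a b = (\<lambda>x. if x \<in> carrier G then a x \<oplus>\<^bsub>k\<^esub> b x else \<zero>\<^bsub>k\<^esub>)"

definition gr_mult :: "('g, 'b) monoid_scheme \<Rightarrow> ('k, 'c) ring_scheme \<Rightarrow> ('g \<Rightarrow> 'k) \<Rightarrow> ('g \<Rightarrow> 'k) \<Rightarrow> 'g \<Rightarrow> 'k" where
  "gr_mult G k a b = (\<lambda>h. if h \<in> carrier G
      then fs_sum k (carrier G) (\<lambda>t. a t \<otimes>\<^bsub>k\<^esub> b (inv\<^bsub>G\<^esub> t \<otimes>\<^bsub>G\<^esub> h))
      else \<zero>\<^bsub>k\<^esub>)"

definition grgr_carrier :: "('g, 'b) monoid_scheme \<Rightarrow> ('k, 'c) ring_scheme \<Rightarrow> ('g \<Rightarrow> 'g \<Rightarrow> 'k) set" where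
  "grgr_carrier G k = {\<beta>. (\<forall>g\<in>carrier G. \<beta> g \<in> grp_ring_carrier G k)
      \<and> (\<forall>g. g \<notin> carrier G \<longrightarrow> \<beta> g = gr_zero G k)
      \<and> finite {g \<in> carrier G. \<beta> g \<noteq> gr_zero G k}}"

definition grgr_add :: "('g, 'b) monoid_scheme \<Rightarrow> ('k, 'c) ring_scheme \<Rightarrow> ('g \<Rightarrow> 'g \<Rightarrow> 'k) \<Rightarrow> ('g \<Rightarrow> 'g \<Rightarrow> 'k) \<Rightarrow> 'g \<Rightarrow> 'g \<Rightarrow> 'k" where
  "grgr_add G k \<beta> \<gamma> = (\<lambda>g. if g \<in> carrier G then gr_add G k (\<beta> g) (\<gamma> g) else gr_zero G k)"

definition act_left :: "('g, 'b) monoid_scheme \<Rightarrow> ('k, 'c) ring_scheme \<Rightarrow> ('g \<Rightarrow> 'k) \<Rightarrow> ('g \<Rightarrow> 'g \<Rightarrow> 'k) \<Rightarrow> 'g \<Rightarrow> 'g \<Rightarrow> 'k" where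
  "act_left G k \<alpha> \<beta> = (\<lambda>g h. if g \<in> carrier G \<and> h \<in> carrier G
      then fs_sum k (carrier G) (\<lambda>t. \<alpha> t \<otimes>\<^bsub>k\<^esub> \<beta> (g \<otimes>\<^bsub>G\<^esub> t) (inv\<^bsub>G\<^esub> t \<otimes>\<^bsub>G\<^esub> h))
      else \<zero>\<^bsub>k\<^esub>)"

definition act_right :: "('g, 'b) monoid_scheme \<Rightarrow> ('k, 'c) ring_scheme \<Rightarrow> ('g \<Rightarrow> 'g \<Rightarrow> 'k) \<Rightarrow> ('g \<Rightarrow> 'k) \<Rightarrow> 'g \<Rightarrow> 'g \<Rightarrow> 'k" where
  "act_right G k \<beta> \<alpha> = (\<lambda>g h. if g \<in> carrier G \<and> h \<in> carrier G
      then fs_sum k (carrier G) (\<lambda>t. \<beta> g t \<otimes>\<^bsub>k\<^esub> \<alpha> (inv\<^bsub>G\<^esub> t \<otimes>\<^bsub>G\<^esub> h))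
      else \<zero>\<^bsub>k\<^esub>)"

definition grgr_mult :: "('g, 'b) monoid_scheme \<Rightarrow> ('k, 'c) ring_scheme \<Rightarrow> ('g \<Rightarrow> 'g \<Rightarrow> 'k) \<Rightarrow> ('g \<Rightarrow> 'g \<Rightarrow> 'k) \<Rightarrow> 'g \<Rightarrow> 'g \<Rightarrow> 'k" where
  "grgr_mult G k \<beta> \<gamma> = (\<lambda>g h. if g \<in> carrier G \<and> h \<in> carrier G
      then fs_sum k (carrier G) (\<lambda>t. \<beta> g t \<otimes>\<^bsub>k\<^esub> \<gamma> (g \<otimes>\<^bsub>G\<^esub> t) (inv\<^bsub>G\<^esub> t \<otimes>\<^bsub>G\<^esub> h))
      else \<zero>\<^bsub>k\<^esub>)"

definition D1 :: "('g, 'b) monoid_scheme \<Rightarrow> ('k, 'c) ring_scheme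
    \<Rightarrow> (('g \<Rightarrow> 'k) \<times> ('g \<Rightarrow> 'g \<Rightarrow> 'k)) ring" where
  "D1 G k = \<lparr>carrier = grp_ring_carrier G k \<times> grgr_carrier G k,
     mult = (\<lambda>(a1, b1) (a2, b2). (gr_mult G k a1 a2,
         grgr_add G k (grgr_add G k (act_left G k a1 b2) (act_right G k b1 a2)) (grgr_mult G k b1 b2))),
     one = (gr_one G k, \<lambda>g. gr_zero G k),
     zero = (gr_zero G k, \<lambda>g. gr_zero G k),
     add = (\<lambda>(a1, b1) (a2, b2). (gr_add G k a1 a2, grgr_add G k b1 b2))\<rparr>"

end

theory Submission
  imports Defs
begin

definition supp :: "('g, 'b) monoid_scheme \<Rightarrow> ('k, 'c) ring_scheme \<Rightarrow> ('g \<Rightarrow> 'k) \<Rightarrow> 'g set" where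
  "supp G k a = {x \<in> carrier G. a x \<noteq> \<zero>\<^bsub>k\<^esub>}"

definition conv :: "('g, 'b) monoid_scheme \<Rightarrow> ('k, 'c) ring_scheme \<Rightarrow> ('g \<Rightarrow> 'k) \<Rightarrow> ('g \<Rightarrow> 'g \<Rightarrow> 'k) \<Rightarrow> 'g \<Rightarrow> 'k" where
  "conv G k a c = (\<lambda>h. if h \<in> carrier G
      then fs_sum k (carrier G) (\<lambda>t. a t \<otimes>\<^bsub>k\<^esub> c t (inv\<^bsub>G\<^esub> t \<otimes>\<^bsub>G\<^esub> h))
      else \<zero>\<^bsub>k\<^esub>)"

locale D1L = G: group G + R: ring k for G :: "('g, 'b) monoid_scheme" and k :: "('k, 'c) ring_scheme"
begin

abbreviation "RC \<equiv> grp_ring_carrier G k"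

lemma fs_sum_eq:
  assumes "finite S" "S \<subseteq> A" "\<And>x. x \<in> A \<Longrightarrow> f x \<in> carrier k" "\<And>x. x \<in> A \<Longrightarrow> x \<notin> S \<Longrightarrow> f x = \<zero>\<^bsub>k\<^esub>"
  shows "fs_sum k A f = finsum k f S"
proof -
  have sub: "{x \<in> A. f x \<noteq> \<zero>\<^bsub>k\<^esub>} \<subseteq> S" using assms by blast
  show ?thesis unfolding fs_sum_def
    by (rule R.add.finprod_mono_neutral_cong_left[OF assms(1) sub]) (use assms in auto)
qed

lemma fs_sum_closed:
  assumes "\<And>x. x \<in> A \<Longrightarrow> f x \<in> carrier k"
  shows "fs_sum k A f \<in> carrier k"
  unfolding fs_sum_def by (rule R.finsum_closed) (use assms in auto)

lemma fs_sum_nz: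
  assumes "fs_sum k A f \<noteq> \<zero>\<^bsub>k\<^esub>"
  shows "\<exists>x\<in>A. f x \<noteq> \<zero>\<^bsub>k\<^esub>"
proof (rule ccontr)
  assume "\<not> ?thesis"
  then have e: "{x \<in> A. f x \<noteq> \<zero>\<^bsub>k\<^esub>} = {}" by auto
  show False using assms unfolding fs_sum_def by (simp only: e) simp
qed

lemma RC_D: "a \<in> RC \<Longrightarrow> x \<in> carrier G \<Longrightarrow> a x \<in> carrier k"
  "a \<in> RC \<Longrightarrow> x \<notin> carrier G \<Longrightarrow> a x = \<zero>\<^bsub>k\<^esub>"
  "a \<in> RC \<Longrightarrow> finite (supp G k a)"
  by (auto simp: grp_ring_carrier_def supp_def)

lemma RC_carr: "a \<in> RC \<Longrightarrow> a x \<in> carrier k"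
  by (cases "x \<in> carrier G") (auto simp: RC_D)

lemma RC_I: "(\<And>x. x \<in> carrier G \<Longrightarrow> a x \<in> carrier k) \<Longrightarrow> (\<And>x. x \<notin> carrier G \<Longrightarrow> a x = \<zero>\<^bsub>k\<^esub>)
  \<Longrightarrow> finite (supp G k a) \<Longrightarrow> a \<in> RC"
  by (auto simp: grp_ring_carrier_def supp_def)

lemma conv_nz:
  assumes "conv G k a c h \<noteq> \<zero>\<^bsub>k\<^esub>" "a \<in> RC" "\<And>t. t \<in> carrier G \<Longrightarrow> c t \<in> RC"
  shows "h \<in> carrier G \<and> (\<exists>t\<in>carrier G. a t \<noteq> \<zero>\<^bsub>k\<^esub> \<and> c t (inv\<^bsub>G\<^esub> t \<otimes>\<^bsub>G\<^esub> h) \<noteq> \<zero>\<^bsub>k\<^esub>)"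
proof -
  have h: "h \<in> carrier G" using assms(1) unfolding conv_def by (auto split: if_splits)
  then obtain t where t: "t \<in> carrier G" "a t \<otimes>\<^bsub>k\<^esub> c t (inv\<^bsub>G\<^esub> t \<otimes>\<^bsub>G\<^esub> h) \<noteq> \<zero>\<^bsub>k\<^esub>"
    using fs_sum_nz assms(1) unfolding conv_def by auto
  have "a t \<in> carrier k" "c t (inv\<^bsub>G\<^esub> t \<otimes>\<^bsub>G\<^esub> h) \<in> carrier k"
    using t assms RC_carr by auto
  then have "a t \<noteq> \<zero>\<^bsub>k\<^esub>" "c t (inv\<^bsub>G\<^esub> t \<otimes>\<^bsub>G\<^esub> h) \<noteq> \<zero>\<^bsub>k\<^esub>"
    using t(2) R.l_null R.r_null by auto
  then show ?thesis using t h by blast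
qed

lemma conv_in:
  assumes "a \<in> RC" "\<And>t. t \<in> carrier G \<Longrightarrow> c t \<in> RC"
  shows "conv G k a c \<in> RC"
proof (rule RC_I)
  fix x assume "x \<in> carrier G"
  then show "conv G k a c x \<in> carrier k"
  proof -
    have "fs_sum k (carrier G) (\<lambda>t. a t \<otimes>\<^bsub>k\<^esub> c t (inv\<^bsub>G\<^esub> t \<otimes>\<^bsub>G\<^esub> x)) \<in> carrier k"
      by (rule fs_sum_closed, rule R.m_closed) (use assms in \<open>auto intro: RC_carr\<close>)
    then show ?thesis using \<open>x \<in> carrier G\<close> by (simp add: conv_def)
  qed
next
  fix x assume "x \<notin> carrier G"
  then show "conv G k a c x = \<zero>\<^bsub>k\<^esub>" unfolding conv_def by simp
next
  have "supp G k (conv G k a c) \<subseteq> (\<Union>t\<in>supp G k a. (\<lambda>s. t \<otimes>\<^bsub>G\<^esub> s) ` supp G k (c t))"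
  proof
    fix h assume "h \<in> supp G k (conv G k a c)"
    then have "conv G k a c h \<noteq> \<zero>\<^bsub>k\<^esub>" unfolding supp_def by simp
    from conv_nz[OF this assms] obtain t where t: "h \<in> carrier G" "t\<in>carrier G" "a t \<noteq> \<zero>\<^bsub>k\<^esub>" "c t (inv\<^bsub>G\<^esub> t \<otimes>\<^bsub>G\<^esub> h) \<noteq> \<zero>\<^bsub>k\<^esub>"
      by blast
    have "h = t \<otimes>\<^bsub>G\<^esub> (inv\<^bsub>G\<^esub> t \<otimes>\<^bsub>G\<^esub> h)" using t by (simp add: G.m_assoc[symmetric])
    moreover have "inv\<^bsub>G\<^esub> t \<otimes>\<^bsub>G\<^esub> h \<in> supp G k (c t)" "t \<in> supp G k a" using t unfolding supp_def by auto
    ultimately show "h \<in> (\<Union>t\<in>supp G k a. (\<lambda>s. t \<otimes>\<^bsub>G\<^esub> s) ` supp G k (c t))"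
      by blast
  qed
  moreover have "finite (\<Union>t\<in>supp G k a. (\<lambda>s. t \<otimes>\<^bsub>G\<^esub> s) ` supp G k (c t))"
  proof (rule finite_UN_I)
    show "finite (supp G k a)" using RC_D(3)[OF assms(1)] .
    fix t assume "t \<in> supp G k a"
    then have "t \<in> carrier G" unfolding supp_def by simp
    then show "finite ((\<lambda>s. t \<otimes>\<^bsub>G\<^esub> s) ` supp G k (c t))" using RC_D(3)[OF assms(2)] by blast
  qed
  ultimately show "finite (supp G k (conv G k a c))" by (rule finite_subset)
qed


lemma conv_supp:
  assumes "a \<in> RC" "\<And>t. t \<in> carrier G \<Longrightarrow> c t \<in> RC"
  shows "supp G k (conv G k a c) \<subseteq> (\<Union>t\<in>supp G k a. (\<lambda>s. t \<otimes>\<^bsub>G\<^esub> s) ` supp G k (c t))"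
proof
  fix h assume "h \<in> supp G k (conv G k a c)"
  then have "conv G k a c h \<noteq> \<zero>\<^bsub>k\<^esub>" unfolding supp_def by simp
  from conv_nz[OF this assms] obtain t where t: "h \<in> carrier G" "t\<in>carrier G" "a t \<noteq> \<zero>\<^bsub>k\<^esub>" "c t (inv\<^bsub>G\<^esub> t \<otimes>\<^bsub>G\<^esub> h) \<noteq> \<zero>\<^bsub>k\<^esub>"
    by blast
  have "h = t \<otimes>\<^bsub>G\<^esub> (inv\<^bsub>G\<^esub> t \<otimes>\<^bsub>G\<^esub> h)" using t by (simp add: G.m_assoc[symmetric])
  moreover have "inv\<^bsub>G\<^esub> t \<otimes>\<^bsub>G\<^esub> h \<in> supp G k (c t)" "t \<in> supp G k a" using t unfolding supp_def by auto
  ultimately show "h \<in> (\<Union>t\<in>supp G k a. (\<lambda>s. t \<otimes>\<^bsub>G\<^esub> s) ` supp G k (c t))"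
    by blast
qed

lemma supp_sub: "supp G k a \<subseteq> carrier G" unfolding supp_def by auto

lemma conv_eq_finsum:
  assumes "a \<in> RC" "\<And>t. t \<in> carrier G \<Longrightarrow> c t \<in> RC" "finite S" "supp G k a \<subseteq> S" "S \<subseteq> carrier G"
    "h \<in> carrier G"
  shows "conv G k a c h = finsum k (\<lambda>t. a t \<otimes>\<^bsub>k\<^esub> c t (inv\<^bsub>G\<^esub> t \<otimes>\<^bsub>G\<^esub> h)) S"
proof -
  have "fs_sum k (carrier G) (\<lambda>t. a t \<otimes>\<^bsub>k\<^esub> c t (inv\<^bsub>G\<^esub> t \<otimes>\<^bsub>G\<^esub> h)) = finsum k (\<lambda>t. a t \<otimes>\<^bsub>k\<^esub> c t (inv\<^bsub>G\<^esub> t \<otimes>\<^bsub>G\<^esub> h)) S"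
  proof (rule fs_sum_eq[OF assms(3,5)])
    fix x assume x: "x \<in> carrier G"
    then show "a x \<otimes>\<^bsub>k\<^esub> c x (inv\<^bsub>G\<^esub> x \<otimes>\<^bsub>G\<^esub> h) \<in> carrier k"
      using assms by (intro R.m_closed RC_carr) auto
    assume "x \<notin> S"
    then have "a x = \<zero>\<^bsub>k\<^esub>" using x assms(4) unfolding supp_def by auto
    then show "a x \<otimes>\<^bsub>k\<^esub> c x (inv\<^bsub>G\<^esub> x \<otimes>\<^bsub>G\<^esub> h) = \<zero>\<^bsub>k\<^esub>"
      using x assms RC_carr by simp
  qed
  then show ?thesis using assms(6) unfolding conv_def by simp
qed

lemma fs_sum_cong:
  assumes "\<And>x. x \<in> A \<Longrightarrow> f x = g x" "\<And>x. x \<in> A \<Longrightarrow> g x \<in> carrier k"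
  shows "fs_sum k A f = fs_sum k A g"
proof -
  have e: "{x \<in> A. f x \<noteq> \<zero>\<^bsub>k\<^esub>} = {x \<in> A. g x \<noteq> \<zero>\<^bsub>k\<^esub>}" using assms by auto
  show ?thesis unfolding fs_sum_def e
    by (rule R.finsum_cong') (use assms in auto)
qed

lemma conv_cong:
  assumes "\<And>t. t \<in> carrier G \<Longrightarrow> a t = a' t" "\<And>t s. t \<in> carrier G \<Longrightarrow> s \<in> carrier G \<Longrightarrow> c t s = c' t s"
    and ca: "\<And>t. t \<in> carrier G \<Longrightarrow> a' t \<in> carrier k" "\<And>t s. t \<in> carrier G \<Longrightarrow> s \<in> carrier G \<Longrightarrow> c' t s \<in> carrier k"
  shows "conv G k a c = conv G k a' c'"
proof
  fix h show "conv G k a c h = conv G k a' c' h"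
  proof (cases "h \<in> carrier G")
    case True
    have "fs_sum k (carrier G) (\<lambda>t. a t \<otimes>\<^bsub>k\<^esub> c t (inv\<^bsub>G\<^esub> t \<otimes>\<^bsub>G\<^esub> h))
       = fs_sum k (carrier G) (\<lambda>t. a' t \<otimes>\<^bsub>k\<^esub> c' t (inv\<^bsub>G\<^esub> t \<otimes>\<^bsub>G\<^esub> h))"
      using True assms(1,2) ca by (intro fs_sum_cong R.m_closed) auto
    then show ?thesis unfolding conv_def using True by simp
  qed (simp add: conv_def)
qed

lemma finsum_swap:
  assumes "finite A" "finite B" "\<And>x y. x \<in> A \<Longrightarrow> y \<in> B \<Longrightarrow> f x y \<in> carrier k"
  shows "finsum k (\<lambda>x. finsum k (\<lambda>y. f x y) B) A = finsum k (\<lambda>y. finsum k (\<lambda>x. f x y) A) B"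
  using assms
proof (induction A rule: finite_induct)
  case empty
  then show ?case by simp
next
  case (insert a A)
  have "finsum k (\<lambda>x. finsum k (\<lambda>y. f x y) B) (insert a A)
      = finsum k (\<lambda>y. f a y) B \<oplus>\<^bsub>k\<^esub> finsum k (\<lambda>x. finsum k (\<lambda>y. f x y) B) A"
    using insert by (intro R.finsum_insert) (auto intro!: R.finsum_closed)
  also have "\<dots> = finsum k (\<lambda>y. f a y) B \<oplus>\<^bsub>k\<^esub> finsum k (\<lambda>y. finsum k (\<lambda>x. f x y) A) B"
    using insert by simp
  also have "\<dots> = finsum k (\<lambda>y. f a y \<oplus>\<^bsub>k\<^esub> finsum k (\<lambda>x. f x y) A) B"
    using insert by (intro R.finsum_addf[symmetric]) (auto intro!: R.finsum_closed)
  also have "\<dots> = finsum k (\<lambda>y. finsum k (\<lambda>x. f x y) (insert a A)) B"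
    using insert by (intro R.finsum_cong') (auto intro!: R.finsum_closed R.finsum_insert[symmetric])
  finally show ?case .
qed


lemma gr_add_closed: "a \<in> RC \<Longrightarrow> b \<in> RC \<Longrightarrow> gr_add G k a b \<in> RC"
proof (rule RC_I)
  assume a: "a \<in> RC" and b: "b \<in> RC"
  show "\<And>x. x \<in> carrier G \<Longrightarrow> gr_add G k a b x \<in> carrier k"
    using a b by (simp add: gr_add_def RC_carr)
  show "\<And>x. x \<notin> carrier G \<Longrightarrow> gr_add G k a b x = \<zero>\<^bsub>k\<^esub>" by (simp add: gr_add_def)
  have "supp G k (gr_add G k a b) \<subseteq> supp G k a \<union> supp G k b"
    unfolding supp_def gr_add_def by auto
  then show "finite (supp G k (gr_add G k a b))" using a b RC_D(3) finite_subset by blast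
qed

lemma gr_add_app: "h \<in> carrier G \<Longrightarrow> gr_add G k a b h = a h \<oplus>\<^bsub>k\<^esub> b h"
  by (simp add: gr_add_def)

lemma gr_add_assoc: "a \<in> RC \<Longrightarrow> b \<in> RC \<Longrightarrow> c \<in> RC \<Longrightarrow>
   gr_add G k (gr_add G k a b) c = gr_add G k a (gr_add G k b c)"
  by (rule ext) (simp add: gr_add_def RC_carr R.a_assoc)

lemma gr_add_comm: "a \<in> RC \<Longrightarrow> b \<in> RC \<Longrightarrow> gr_add G k a b = gr_add G k b a"
  by (rule ext) (simp add: gr_add_def RC_carr R.a_comm)

lemma gr_zero_RC: "gr_zero G k \<in> RC"
  by (rule RC_I) (auto simp: gr_zero_def supp_def)

lemma gr_zero_add: "a \<in> RC \<Longrightarrow> gr_add G k (gr_zero G k) a = a"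
  by (rule ext) (simp add: gr_add_def gr_zero_def RC_carr RC_D)

lemma gr_add_zero: "a \<in> RC \<Longrightarrow> gr_add G k a (gr_zero G k) = a"
  by (rule ext) (simp add: gr_add_def gr_zero_def RC_carr RC_D)

definition "gr_neg a = (\<lambda>x. if x \<in> carrier G then \<ominus>\<^bsub>k\<^esub> a x else \<zero>\<^bsub>k\<^esub>)"

lemma gr_neg_RC: "a \<in> RC \<Longrightarrow> gr_neg a \<in> RC"
proof (rule RC_I)
  assume a: "a \<in> RC"
  show "\<And>x. x \<in> carrier G \<Longrightarrow> gr_neg a x \<in> carrier k"
    using a by (simp add: gr_neg_def RC_carr)
  show "\<And>x. x \<notin> carrier G \<Longrightarrow> gr_neg a x = \<zero>\<^bsub>k\<^esub>" by (simp add: gr_neg_def)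
  have "supp G k (gr_neg a) \<subseteq> supp G k a"
    using a unfolding supp_def gr_neg_def by (auto simp: RC_carr)
  then show "finite (supp G k (gr_neg a))" using a RC_D(3) finite_subset by blast
qed

lemma gr_neg_add: "a \<in> RC \<Longrightarrow> gr_add G k (gr_neg a) a = gr_zero G k"
  by (rule ext) (simp add: gr_add_def gr_neg_def gr_zero_def RC_carr R.l_neg)

lemma gr_one_RC: "gr_one G k \<in> RC"
proof (rule RC_I)
  show "\<And>x. x \<in> carrier G \<Longrightarrow> gr_one G k x \<in> carrier k" by (simp add: gr_one_def)
  show "\<And>x. x \<notin> carrier G \<Longrightarrow> gr_one G k x = \<zero>\<^bsub>k\<^esub>" by (auto simp add: gr_one_def)
  have "supp G k (gr_one G k) \<subseteq> {\<one>\<^bsub>G\<^esub>}" unfolding supp_def gr_one_def by auto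
  then show "finite (supp G k (gr_one G k))" using finite_subset by blast
qed

lemma conv_addl:
  assumes a1: "a1 \<in> RC" and a2: "a2 \<in> RC" and c: "\<And>t. t \<in> carrier G \<Longrightarrow> c t \<in> RC"
  shows "conv G k (gr_add G k a1 a2) c = gr_add G k (conv G k a1 c) (conv G k a2 c)"
proof
  fix h show "conv G k (gr_add G k a1 a2) c h = gr_add G k (conv G k a1 c) (conv G k a2 c) h"
  proof (cases "h \<in> carrier G")
    case h: True
    define S where "S = supp G k a1 \<union> supp G k a2"
    have S: "finite S" "S \<subseteq> carrier G" using a1 a2 RC_D(3) supp_sub unfolding S_def by auto
    have sa: "supp G k (gr_add G k a1 a2) \<subseteq> S" unfolding S_def supp_def gr_add_def by auto
    have cc: "\<And>t. t \<in> S \<Longrightarrow> c t (inv\<^bsub>G\<^esub> t \<otimes>\<^bsub>G\<^esub> h) \<in> carrier k" using S c RC_carr by blast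
    have "conv G k (gr_add G k a1 a2) c h = finsum k (\<lambda>t. gr_add G k a1 a2 t \<otimes>\<^bsub>k\<^esub> c t (inv\<^bsub>G\<^esub> t \<otimes>\<^bsub>G\<^esub> h)) S"
      by (rule conv_eq_finsum[OF gr_add_closed[OF a1 a2] c S(1) sa S(2) h])
    also have "\<dots> = finsum k (\<lambda>t. a1 t \<otimes>\<^bsub>k\<^esub> c t (inv\<^bsub>G\<^esub> t \<otimes>\<^bsub>G\<^esub> h) \<oplus>\<^bsub>k\<^esub> a2 t \<otimes>\<^bsub>k\<^esub> c t (inv\<^bsub>G\<^esub> t \<otimes>\<^bsub>G\<^esub> h)) S"
      using S cc a1 a2 by (intro R.finsum_cong') (auto simp: gr_add_app R.l_distr RC_carr)
    also have "\<dots> = finsum k (\<lambda>t. a1 t \<otimes>\<^bsub>k\<^esub> c t (inv\<^bsub>G\<^esub> t \<otimes>\<^bsub>G\<^esub> h)) S \<oplus>\<^bsub>k\<^esub> finsum k (\<lambda>t. a2 t \<otimes>\<^bsub>k\<^esub> c t (inv\<^bsub>G\<^esub> t \<otimes>\<^bsub>G\<^esub> h)) S"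
      using S cc a1 a2 by (intro R.finsum_addf) (auto simp: RC_carr)
    also have "\<dots> = conv G k a1 c h \<oplus>\<^bsub>k\<^esub> conv G k a2 c h"
      using conv_eq_finsum[OF a1 c S(1) _ S(2) h] conv_eq_finsum[OF a2 c S(1) _ S(2) h]
      unfolding S_def by simp
    finally show ?thesis using h by (simp add: gr_add_app)
  qed (simp add: conv_def gr_add_def)
qed

lemma conv_addr:
  assumes a: "a \<in> RC" and c1: "\<And>t. t \<in> carrier G \<Longrightarrow> c1 t \<in> RC" and c2: "\<And>t. t \<in> carrier G \<Longrightarrow> c2 t \<in> RC"
  shows "conv G k a (\<lambda>t. gr_add G k (c1 t) (c2 t)) = gr_add G k (conv G k a c1) (conv G k a c2)"
proof
  fix h show "conv G k a (\<lambda>t. gr_add G k (c1 t) (c2 t)) h = gr_add G k (conv G k a c1) (conv G k a c2) h"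
  proof (cases "h \<in> carrier G")
    case h: True
    define S where "S = supp G k a"
    have S: "finite S" "S \<subseteq> carrier G" "supp G k a \<subseteq> S" using a RC_D(3) supp_sub unfolding S_def by auto
    have cc: "\<And>t. t \<in> S \<Longrightarrow> c1 t (inv\<^bsub>G\<^esub> t \<otimes>\<^bsub>G\<^esub> h) \<in> carrier k" "\<And>t. t \<in> S \<Longrightarrow> c2 t (inv\<^bsub>G\<^esub> t \<otimes>\<^bsub>G\<^esub> h) \<in> carrier k"
      using S c1 c2 RC_carr by blast+
    have ginv: "\<And>t. t \<in> S \<Longrightarrow> inv\<^bsub>G\<^esub> t \<otimes>\<^bsub>G\<^esub> h \<in> carrier G" using S h by auto
    have "conv G k a (\<lambda>t. gr_add G k (c1 t) (c2 t)) h = finsum k (\<lambda>t. a t \<otimes>\<^bsub>k\<^esub> gr_add G k (c1 t) (c2 t) (inv\<^bsub>G\<^esub> t \<otimes>\<^bsub>G\<^esub> h)) S"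
      by (rule conv_eq_finsum[OF a _ S(1) S(3) S(2) h]) (use c1 c2 gr_add_closed in blast)
    also have "\<dots> = finsum k (\<lambda>t. a t \<otimes>\<^bsub>k\<^esub> c1 t (inv\<^bsub>G\<^esub> t \<otimes>\<^bsub>G\<^esub> h) \<oplus>\<^bsub>k\<^esub> a t \<otimes>\<^bsub>k\<^esub> c2 t (inv\<^bsub>G\<^esub> t \<otimes>\<^bsub>G\<^esub> h)) S"
      using S cc a ginv by (intro R.finsum_cong') (auto simp: gr_add_app R.r_distr RC_carr)
    also have "\<dots> = finsum k (\<lambda>t. a t \<otimes>\<^bsub>k\<^esub> c1 t (inv\<^bsub>G\<^esub> t \<otimes>\<^bsub>G\<^esub> h)) S \<oplus>\<^bsub>k\<^esub> finsum k (\<lambda>t. a t \<otimes>\<^bsub>k\<^esub> c2 t (inv\<^bsub>G\<^esub> t \<otimes>\<^bsub>G\<^esub> h)) S"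
      using S cc a by (intro R.finsum_addf) (auto simp: RC_carr)
    also have "\<dots> = conv G k a c1 h \<oplus>\<^bsub>k\<^esub> conv G k a c2 h"
      using conv_eq_finsum[OF a c1 S(1) S(3) S(2) h] conv_eq_finsum[OF a c2 S(1) S(3) S(2) h]
      by simp
    finally show ?thesis using h by (simp add: gr_add_app)
  qed (simp add: conv_def gr_add_def)
qed

lemma conv_zero_l:
  assumes c: "\<And>t. t \<in> carrier G \<Longrightarrow> c t \<in> RC"
  shows "conv G k (gr_zero G k) c = gr_zero G k"
proof
  fix h show "conv G k (gr_zero G k) c h = gr_zero G k h"
  proof (rule ccontr)
    assume "conv G k (gr_zero G k) c h \<noteq> gr_zero G k h"
    then have "conv G k (gr_zero G k) c h \<noteq> \<zero>\<^bsub>k\<^esub>" by (simp add: gr_zero_def)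
    from conv_nz[OF this gr_zero_RC c] show False by (simp add: gr_zero_def)
  qed
qed

lemma conv_one_l:
  assumes c: "\<And>t. t \<in> carrier G \<Longrightarrow> c t \<in> RC"
  shows "conv G k (gr_one G k) c = c \<one>\<^bsub>G\<^esub>"
proof
  fix h show "conv G k (gr_one G k) c h = c \<one>\<^bsub>G\<^esub> h"
  proof (cases "h \<in> carrier G")
    case h: True
    have s: "supp G k (gr_one G k) \<subseteq> {\<one>\<^bsub>G\<^esub>}" unfolding supp_def gr_one_def by auto
    have "conv G k (gr_one G k) c h = finsum k (\<lambda>t. gr_one G k t \<otimes>\<^bsub>k\<^esub> c t (inv\<^bsub>G\<^esub> t \<otimes>\<^bsub>G\<^esub> h)) {\<one>\<^bsub>G\<^esub>}"
      by (rule conv_eq_finsum[OF gr_one_RC c _ s _ h]) auto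
    also have "\<dots> = c \<one>\<^bsub>G\<^esub> h" using h c[of "\<one>\<^bsub>G\<^esub>"] by (simp add: gr_one_def RC_carr)
    finally show ?thesis .
  next
    case False
    then show ?thesis using c[of "\<one>\<^bsub>G\<^esub>"] by (simp add: conv_def RC_D)
  qed
qed

lemma conv_one_r:
  assumes a: "a \<in> RC"
  shows "conv G k a (\<lambda>_. gr_one G k) = a"
proof
  fix h show "conv G k a (\<lambda>_. gr_one G k) h = a h"
  proof (cases "h \<in> carrier G")
    case h: True
    have "fs_sum k (carrier G) (\<lambda>t. a t \<otimes>\<^bsub>k\<^esub> gr_one G k (inv\<^bsub>G\<^esub> t \<otimes>\<^bsub>G\<^esub> h))
       = finsum k (\<lambda>t. a t \<otimes>\<^bsub>k\<^esub> gr_one G k (inv\<^bsub>G\<^esub> t \<otimes>\<^bsub>G\<^esub> h)) {h}"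
    proof (rule fs_sum_eq)
      fix x assume x: "x \<in> carrier G"
      then show "a x \<otimes>\<^bsub>k\<^esub> gr_one G k (inv\<^bsub>G\<^esub> x \<otimes>\<^bsub>G\<^esub> h) \<in> carrier k"
        using a by (simp add: gr_one_def RC_carr)
      assume "x \<notin> {h}"
      then have "inv\<^bsub>G\<^esub> x \<otimes>\<^bsub>G\<^esub> h \<noteq> \<one>\<^bsub>G\<^esub>" using x h
        by (metis G.inv_closed G.inv_comm G.inv_inv G.inv_equality singletonI)
      then show "a x \<otimes>\<^bsub>k\<^esub> gr_one G k (inv\<^bsub>G\<^esub> x \<otimes>\<^bsub>G\<^esub> h) = \<zero>\<^bsub>k\<^esub>"
        using a x by (simp add: gr_one_def RC_carr)
    qed (use h in auto)
    also have "\<dots> = a h" using h a by (simp add: gr_one_def RC_carr)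
    finally show ?thesis using h by (simp add: conv_def)
  next
    case False
    then show ?thesis using a by (simp add: conv_def RC_D)
  qed
qed


lemma conv_assoc:
  assumes A: "A \<in> RC" and B: "\<And>t. t \<in> carrier G \<Longrightarrow> B t \<in> RC" and C: "\<And>t. t \<in> carrier G \<Longrightarrow> C t \<in> RC"
  shows "conv G k (conv G k A B) C = conv G k A (\<lambda>t. conv G k (B t) (\<lambda>u. C (t \<otimes>\<^bsub>G\<^esub> u)))"
proof
  fix h show "conv G k (conv G k A B) C h = conv G k A (\<lambda>t. conv G k (B t) (\<lambda>u. C (t \<otimes>\<^bsub>G\<^esub> u))) h"
  proof (cases "h \<in> carrier G")
    case h: True
    define T where "T = supp G k A"
    define U where "U = (\<Union>t\<in>T. (\<lambda>s. t \<otimes>\<^bsub>G\<^esub> s) ` supp G k (B t))"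
    have T: "finite T" "T \<subseteq> carrier G" using A RC_D(3) supp_sub unfolding T_def by auto
    have sT: "supp G k A \<subseteq> T" unfolding T_def by (rule subset_refl)
    have U: "finite U" "U \<subseteq> carrier G"
      unfolding U_def using T B RC_D(3) supp_sub by (auto intro!: finite_UN_I simp: supp_def)
    have AB: "conv G k A B \<in> RC" by (rule conv_in[OF A B])
    have suppAB: "supp G k (conv G k A B) \<subseteq> U" using conv_supp[OF A B] unfolding U_def T_def .
    have Cu: "\<And>t u. t \<in> carrier G \<Longrightarrow> u \<in> carrier G \<Longrightarrow> C (t \<otimes>\<^bsub>G\<^esub> u) \<in> RC"
      using C by simp
    have BC: "\<And>t. t \<in> carrier G \<Longrightarrow> conv G k (B t) (\<lambda>u. C (t \<otimes>\<^bsub>G\<^esub> u)) \<in> RC"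
      using B Cu by (intro conv_in) auto
    let ?f = "\<lambda>s t. (A t \<otimes>\<^bsub>k\<^esub> B t (inv\<^bsub>G\<^esub> t \<otimes>\<^bsub>G\<^esub> s)) \<otimes>\<^bsub>k\<^esub> C s (inv\<^bsub>G\<^esub> s \<otimes>\<^bsub>G\<^esub> h)"
    have fc: "\<And>s t. s \<in> U \<Longrightarrow> t \<in> T \<Longrightarrow> ?f s t \<in> carrier k"
      using U T A B C h by (intro R.m_closed RC_carr) auto
    have "conv G k (conv G k A B) C h = finsum k (\<lambda>s. conv G k A B s \<otimes>\<^bsub>k\<^esub> C s (inv\<^bsub>G\<^esub> s \<otimes>\<^bsub>G\<^esub> h)) U"
      by (rule conv_eq_finsum[OF AB C U(1) suppAB U(2) h])
    also have "\<dots> = finsum k (\<lambda>s. finsum k (\<lambda>t. ?f s t) T) U"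
    proof (rule R.finsum_cong')
      show "(\<lambda>s. finsum k (\<lambda>t. ?f s t) T) \<in> U \<rightarrow> carrier k" using fc by (auto intro!: R.finsum_closed)
      fix s assume s: "s \<in> U"
      have "conv G k A B s = finsum k (\<lambda>t. A t \<otimes>\<^bsub>k\<^esub> B t (inv\<^bsub>G\<^esub> t \<otimes>\<^bsub>G\<^esub> s)) T"
        using conv_eq_finsum[OF A B T(1) _ T(2)] s U unfolding T_def by auto
      then show "conv G k A B s \<otimes>\<^bsub>k\<^esub> C s (inv\<^bsub>G\<^esub> s \<otimes>\<^bsub>G\<^esub> h) = finsum k (\<lambda>t. ?f s t) T"
        using s U T A B C h by (simp add: R.finsum_ldistr RC_carr subset_iff)
    qed simp
    also have "\<dots> = finsum k (\<lambda>t. finsum k (\<lambda>s. ?f s t) U) T"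
      by (rule finsum_swap[OF U(1) T(1) fc])
    also have "\<dots> = finsum k (\<lambda>t. A t \<otimes>\<^bsub>k\<^esub> conv G k (B t) (\<lambda>u. C (t \<otimes>\<^bsub>G\<^esub> u)) (inv\<^bsub>G\<^esub> t \<otimes>\<^bsub>G\<^esub> h)) T"
    proof (rule R.finsum_cong')
      show "(\<lambda>t. A t \<otimes>\<^bsub>k\<^esub> conv G k (B t) (\<lambda>u. C (t \<otimes>\<^bsub>G\<^esub> u)) (inv\<^bsub>G\<^esub> t \<otimes>\<^bsub>G\<^esub> h)) \<in> T \<rightarrow> carrier k"
      proof
        fix t assume "t \<in> T"
        then have "t \<in> carrier G" using T by auto
        then show "A t \<otimes>\<^bsub>k\<^esub> conv G k (B t) (\<lambda>u. C (t \<otimes>\<^bsub>G\<^esub> u)) (inv\<^bsub>G\<^esub> t \<otimes>\<^bsub>G\<^esub> h) \<in> carrier k"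
          using RC_carr[OF A] RC_carr[OF BC] by blast
      qed
      fix t assume t: "t \<in> T"
      have tG: "t \<in> carrier G" using t T by auto
      define V where "V = (\<lambda>s. inv\<^bsub>G\<^esub> t \<otimes>\<^bsub>G\<^esub> s) ` U"
      have V: "finite V" "V \<subseteq> carrier G" using U tG unfolding V_def by auto
      have sV: "supp G k (B t) \<subseteq> V"
      proof
        fix u assume u: "u \<in> supp G k (B t)"
        then have "t \<otimes>\<^bsub>G\<^esub> u \<in> U" unfolding U_def using t by blast
        moreover have "u = inv\<^bsub>G\<^esub> t \<otimes>\<^bsub>G\<^esub> (t \<otimes>\<^bsub>G\<^esub> u)" using u tG
          by (simp add: supp_def G.m_assoc[symmetric])
        ultimately show "u \<in> V" unfolding V_def by blast
      qed
      have ih: "inv\<^bsub>G\<^esub> t \<otimes>\<^bsub>G\<^esub> h \<in> carrier G" using tG h by simp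
      have "conv G k (B t) (\<lambda>u. C (t \<otimes>\<^bsub>G\<^esub> u)) (inv\<^bsub>G\<^esub> t \<otimes>\<^bsub>G\<^esub> h)
         = finsum k (\<lambda>u. B t u \<otimes>\<^bsub>k\<^esub> C (t \<otimes>\<^bsub>G\<^esub> u) (inv\<^bsub>G\<^esub> u \<otimes>\<^bsub>G\<^esub> (inv\<^bsub>G\<^esub> t \<otimes>\<^bsub>G\<^esub> h))) V"
        by (rule conv_eq_finsum[OF B[OF tG] _ V(1) sV V(2) ih]) (use Cu tG in auto)
      also have "\<dots> = finsum k (\<lambda>s. B t (inv\<^bsub>G\<^esub> t \<otimes>\<^bsub>G\<^esub> s) \<otimes>\<^bsub>k\<^esub> C (t \<otimes>\<^bsub>G\<^esub> (inv\<^bsub>G\<^esub> t \<otimes>\<^bsub>G\<^esub> s)) (inv\<^bsub>G\<^esub> (inv\<^bsub>G\<^esub> t \<otimes>\<^bsub>G\<^esub> s) \<otimes>\<^bsub>G\<^esub> (inv\<^bsub>G\<^esub> t \<otimes>\<^bsub>G\<^esub> h))) U"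
        unfolding V_def
      proof (rule R.finsum_reindex)
        show "(\<lambda>u. B t u \<otimes>\<^bsub>k\<^esub> C (t \<otimes>\<^bsub>G\<^esub> u) (inv\<^bsub>G\<^esub> u \<otimes>\<^bsub>G\<^esub> (inv\<^bsub>G\<^esub> t \<otimes>\<^bsub>G\<^esub> h))) \<in> (\<lambda>s. inv\<^bsub>G\<^esub> t \<otimes>\<^bsub>G\<^esub> s) ` U \<rightarrow> carrier k"
          using V tG Cu B unfolding V_def by (auto intro!: R.m_closed RC_carr[OF B] RC_carr[OF Cu])
        show "inj_on (\<lambda>s. inv\<^bsub>G\<^esub> t \<otimes>\<^bsub>G\<^esub> s) U" using U tG
          by (auto intro!: inj_onI simp: subset_iff)
      qed
      also have "\<dots> = finsum k (\<lambda>s. B t (inv\<^bsub>G\<^esub> t \<otimes>\<^bsub>G\<^esub> s) \<otimes>\<^bsub>k\<^esub> C s (inv\<^bsub>G\<^esub> s \<otimes>\<^bsub>G\<^esub> h)) U"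
      proof (rule R.finsum_cong')
        show "(\<lambda>s. B t (inv\<^bsub>G\<^esub> t \<otimes>\<^bsub>G\<^esub> s) \<otimes>\<^bsub>k\<^esub> C s (inv\<^bsub>G\<^esub> s \<otimes>\<^bsub>G\<^esub> h)) \<in> U \<rightarrow> carrier k"
          using U tG B C by (auto intro!: R.m_closed RC_carr[OF B] RC_carr[OF C] simp: subset_iff)
        fix s assume "s \<in> U"
        then have s: "s \<in> carrier G" using U by auto
        have "t \<otimes>\<^bsub>G\<^esub> (inv\<^bsub>G\<^esub> t \<otimes>\<^bsub>G\<^esub> s) = s" using s tG by (simp add: G.m_assoc[symmetric])
        moreover have "inv\<^bsub>G\<^esub> (inv\<^bsub>G\<^esub> t \<otimes>\<^bsub>G\<^esub> s) \<otimes>\<^bsub>G\<^esub> (inv\<^bsub>G\<^esub> t \<otimes>\<^bsub>G\<^esub> h) = inv\<^bsub>G\<^esub> s \<otimes>\<^bsub>G\<^esub> h"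
          using s tG h by (simp add: G.inv_mult_group G.m_assoc) (simp add: G.m_assoc[symmetric])
        ultimately show "B t (inv\<^bsub>G\<^esub> t \<otimes>\<^bsub>G\<^esub> s) \<otimes>\<^bsub>k\<^esub> C (t \<otimes>\<^bsub>G\<^esub> (inv\<^bsub>G\<^esub> t \<otimes>\<^bsub>G\<^esub> s)) (inv\<^bsub>G\<^esub> (inv\<^bsub>G\<^esub> t \<otimes>\<^bsub>G\<^esub> s) \<otimes>\<^bsub>G\<^esub> (inv\<^bsub>G\<^esub> t \<otimes>\<^bsub>G\<^esub> h))
           = B t (inv\<^bsub>G\<^esub> t \<otimes>\<^bsub>G\<^esub> s) \<otimes>\<^bsub>k\<^esub> C s (inv\<^bsub>G\<^esub> s \<otimes>\<^bsub>G\<^esub> h)" by simp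
      qed simp
      finally have e: "conv G k (B t) (\<lambda>u. C (t \<otimes>\<^bsub>G\<^esub> u)) (inv\<^bsub>G\<^esub> t \<otimes>\<^bsub>G\<^esub> h) = finsum k (\<lambda>s. B t (inv\<^bsub>G\<^esub> t \<otimes>\<^bsub>G\<^esub> s) \<otimes>\<^bsub>k\<^esub> C s (inv\<^bsub>G\<^esub> s \<otimes>\<^bsub>G\<^esub> h)) U" .
      have "finsum k (\<lambda>s. ?f s t) U = finsum k (\<lambda>s. A t \<otimes>\<^bsub>k\<^esub> (B t (inv\<^bsub>G\<^esub> t \<otimes>\<^bsub>G\<^esub> s) \<otimes>\<^bsub>k\<^esub> C s (inv\<^bsub>G\<^esub> s \<otimes>\<^bsub>G\<^esub> h))) U"
        using U tG A B C h by (intro R.finsum_cong') (auto intro!: R.m_closed RC_carr[OF B] RC_carr[OF C] simp: R.m_assoc RC_carr[OF A] RC_carr[OF B] RC_carr[OF C] subset_iff)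
      also have "\<dots> = A t \<otimes>\<^bsub>k\<^esub> finsum k (\<lambda>s. B t (inv\<^bsub>G\<^esub> t \<otimes>\<^bsub>G\<^esub> s) \<otimes>\<^bsub>k\<^esub> C s (inv\<^bsub>G\<^esub> s \<otimes>\<^bsub>G\<^esub> h)) U"
        using U tG A B C h by (intro R.finsum_rdistr[symmetric]) (auto intro!: R.m_closed RC_carr[OF B] RC_carr[OF C] RC_carr[OF A] simp: subset_iff)
      finally show "finsum k (\<lambda>s. ?f s t) U = A t \<otimes>\<^bsub>k\<^esub> conv G k (B t) (\<lambda>u. C (t \<otimes>\<^bsub>G\<^esub> u)) (inv\<^bsub>G\<^esub> t \<otimes>\<^bsub>G\<^esub> h)"
        using e by simp
    qed simp
    also have "\<dots> = conv G k A (\<lambda>t. conv G k (B t) (\<lambda>u. C (t \<otimes>\<^bsub>G\<^esub> u))) h"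
      by (rule conv_eq_finsum[OF A BC T(1) sT T(2) h, symmetric])
    finally show ?thesis .
  next
    case False
    then show ?thesis by (simp add: conv_def)
  qed
qed


abbreviation "GG \<equiv> grgr_carrier G k"

definition "suppg \<beta> = {g \<in> carrier G. \<beta> g \<noteq> gr_zero G k}"

lemma GG_D: "\<beta> \<in> GG \<Longrightarrow> \<beta> g \<in> RC"
  "\<beta> \<in> GG \<Longrightarrow> g \<notin> carrier G \<Longrightarrow> \<beta> g = gr_zero G k"
  "\<beta> \<in> GG \<Longrightarrow> finite (suppg \<beta>)"
  by (cases "g \<in> carrier G") (auto simp: grgr_carrier_def suppg_def gr_zero_RC)

lemma GG_I: "(\<And>g. g \<in> carrier G \<Longrightarrow> \<beta> g \<in> RC) \<Longrightarrow> (\<And>g. g \<notin> carrier G \<Longrightarrow> \<beta> g = gr_zero G k)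
  \<Longrightarrow> finite (suppg \<beta>) \<Longrightarrow> \<beta> \<in> GG"
  by (auto simp: grgr_carrier_def suppg_def)

lemma grgr_add_closed: "b \<in> GG \<Longrightarrow> c \<in> GG \<Longrightarrow> grgr_add G k b c \<in> GG"
proof (rule GG_I)
  assume b: "b \<in> GG" and c: "c \<in> GG"
  show "\<And>g. g \<in> carrier G \<Longrightarrow> grgr_add G k b c g \<in> RC"
    using b c by (simp add: grgr_add_def GG_D gr_add_closed)
  show "\<And>g. g \<notin> carrier G \<Longrightarrow> grgr_add G k b c g = gr_zero G k" by (simp add: grgr_add_def)
  have "suppg (grgr_add G k b c) \<subseteq> suppg b \<union> suppg c"
    unfolding suppg_def grgr_add_def using b c by (auto simp: gr_add_zero gr_zero_RC)
  then show "finite (suppg (grgr_add G k b c))" using b c GG_D(3) finite_subset by blast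
qed

lemma grgr_add_assoc: "a \<in> GG \<Longrightarrow> b \<in> GG \<Longrightarrow> c \<in> GG \<Longrightarrow>
   grgr_add G k (grgr_add G k a b) c = grgr_add G k a (grgr_add G k b c)"
  by (rule ext) (simp add: grgr_add_def GG_D gr_add_assoc)

lemma grgr_add_comm: "a \<in> GG \<Longrightarrow> b \<in> GG \<Longrightarrow> grgr_add G k a b = grgr_add G k b a"
  by (rule ext) (simp add: grgr_add_def GG_D gr_add_comm)

lemma grgr_zero_GG: "(\<lambda>g. gr_zero G k) \<in> GG"
  by (rule GG_I) (auto simp: suppg_def gr_zero_RC)

lemma grgr_zero_add: "a \<in> GG \<Longrightarrow> grgr_add G k (\<lambda>g. gr_zero G k) a = a"
  by (rule ext) (simp add: grgr_add_def GG_D gr_zero_add)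

definition "grgr_neg b = (\<lambda>g. if g \<in> carrier G then gr_neg (b g) else gr_zero G k)"

lemma gr_neg_zero: "gr_neg (gr_zero G k) = gr_zero G k"
  by (rule ext) (simp add: gr_neg_def gr_zero_def)

lemma grgr_neg_GG: "b \<in> GG \<Longrightarrow> grgr_neg b \<in> GG"
proof (rule GG_I)
  assume b: "b \<in> GG"
  show "\<And>g. g \<in> carrier G \<Longrightarrow> grgr_neg b g \<in> RC"
    using b by (simp add: grgr_neg_def GG_D gr_neg_RC)
  show "\<And>g. g \<notin> carrier G \<Longrightarrow> grgr_neg b g = gr_zero G k" by (simp add: grgr_neg_def)
  have "suppg (grgr_neg b) \<subseteq> suppg b"
    unfolding suppg_def grgr_neg_def using b by (auto simp: gr_neg_zero)
  then show "finite (suppg (grgr_neg b))" using b GG_D(3) finite_subset by blast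
qed

lemma grgr_neg_add: "b \<in> GG \<Longrightarrow> grgr_add G k (grgr_neg b) b = (\<lambda>g. gr_zero G k)"
  by (rule ext) (simp add: grgr_add_def grgr_neg_def GG_D gr_neg_add)

lemma D1_carrier: "carrier (D1 G k) = RC \<times> GG" by (simp add: D1_def)
lemma D1_add: "add (D1 G k) (a1, b1) (a2, b2) = (gr_add G k a1 a2, grgr_add G k b1 b2)" by (simp add: D1_def)
lemma D1_zero: "zero (D1 G k) = (gr_zero G k, \<lambda>g. gr_zero G k)" by (simp add: D1_def)
lemma D1_one: "one (D1 G k) = (gr_one G k, \<lambda>g. gr_zero G k)" by (simp add: D1_def)
lemma D1_mult: "mult (D1 G k) (a1, b1) (a2, b2) = (gr_mult G k a1 a2,
         grgr_add G k (grgr_add G k (act_left G k a1 b2) (act_right G k b1 a2)) (grgr_mult G k b1 b2))"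
  by (simp add: D1_def)

lemma D1_abelian: "abelian_group (D1 G k)"
proof (rule abelian_groupI)
  fix x y assume "x \<in> carrier (D1 G k)" "y \<in> carrier (D1 G k)"
  then show "x \<oplus>\<^bsub>D1 G k\<^esub> y \<in> carrier (D1 G k)"
    by (cases x, cases y) (simp add: D1_carrier D1_add gr_add_closed grgr_add_closed)
next
  show "\<zero>\<^bsub>D1 G k\<^esub> \<in> carrier (D1 G k)" by (simp add: D1_carrier D1_zero gr_zero_RC grgr_zero_GG)
next
  fix x y z assume "x \<in> carrier (D1 G k)" "y \<in> carrier (D1 G k)" "z \<in> carrier (D1 G k)"
  then show "x \<oplus>\<^bsub>D1 G k\<^esub> y \<oplus>\<^bsub>D1 G k\<^esub> z = x \<oplus>\<^bsub>D1 G k\<^esub> (y \<oplus>\<^bsub>D1 G k\<^esub> z)"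
    by (cases x, cases y, cases z) (simp add: D1_carrier D1_add gr_add_assoc grgr_add_assoc)
next
  fix x y assume "x \<in> carrier (D1 G k)" "y \<in> carrier (D1 G k)"
  then show "x \<oplus>\<^bsub>D1 G k\<^esub> y = y \<oplus>\<^bsub>D1 G k\<^esub> x"
    by (cases x, cases y) (simp add: D1_carrier D1_add gr_add_comm grgr_add_comm)
next
  fix x assume "x \<in> carrier (D1 G k)"
  then show "\<zero>\<^bsub>D1 G k\<^esub> \<oplus>\<^bsub>D1 G k\<^esub> x = x"
    by (cases x) (simp add: D1_carrier D1_add D1_zero gr_zero_add grgr_zero_add)
next
  fix x assume x: "x \<in> carrier (D1 G k)"
  obtain a b where ab: "x = (a, b)" by (cases x)
  have "(gr_neg a, grgr_neg b) \<in> carrier (D1 G k) \<and> (gr_neg a, grgr_neg b) \<oplus>\<^bsub>D1 G k\<^esub> x = \<zero>\<^bsub>D1 G k\<^esub>"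
    using x ab by (simp add: D1_carrier D1_add D1_zero gr_neg_RC grgr_neg_GG gr_neg_add grgr_neg_add)
  then show "\<exists>y\<in>carrier (D1 G k). y \<oplus>\<^bsub>D1 G k\<^esub> x = \<zero>\<^bsub>D1 G k\<^esub>" by blast
qed


lemma gr_mult_conv: "gr_mult G k a b = conv G k a (\<lambda>_. b)"
  by (simp add: gr_mult_def conv_def)

lemma act_left_conv: "act_left G k a b g = (if g \<in> carrier G then conv G k a (\<lambda>t. b (g \<otimes>\<^bsub>G\<^esub> t)) else gr_zero G k)"
  by (rule ext) (simp add: act_left_def conv_def gr_zero_def)

lemma act_right_conv: "act_right G k b a g = (if g \<in> carrier G then conv G k (b g) (\<lambda>_. a) else gr_zero G k)"
  by (rule ext) (simp add: act_right_def conv_def gr_zero_def)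

lemma grgr_mult_conv: "grgr_mult G k b c g = (if g \<in> carrier G then conv G k (b g) (\<lambda>t. c (g \<otimes>\<^bsub>G\<^esub> t)) else gr_zero G k)"
  by (rule ext) (simp add: grgr_mult_def conv_def gr_zero_def)

lemma gr_mult_RC: "a \<in> RC \<Longrightarrow> b \<in> RC \<Longrightarrow> gr_mult G k a b \<in> RC"
  unfolding gr_mult_conv by (rule conv_in) auto

lemma act_left_GG:
  assumes a: "a \<in> RC" and b: "b \<in> GG"
  shows "act_left G k a b \<in> GG"
proof (rule GG_I)
  show "\<And>g. g \<in> carrier G \<Longrightarrow> act_left G k a b g \<in> RC"
    unfolding act_left_conv using a b GG_D(1) by (simp add: conv_in)
  show "\<And>g. g \<notin> carrier G \<Longrightarrow> act_left G k a b g = gr_zero G k" by (simp add: act_left_conv)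
  have "suppg (act_left G k a b) \<subseteq> (\<lambda>(s, t). s \<otimes>\<^bsub>G\<^esub> inv\<^bsub>G\<^esub> t) ` (suppg b \<times> supp G k a)"
  proof
    fix g assume "g \<in> suppg (act_left G k a b)"
    then have g: "g \<in> carrier G" "conv G k a (\<lambda>t. b (g \<otimes>\<^bsub>G\<^esub> t)) \<noteq> gr_zero G k"
      unfolding suppg_def by (auto simp: act_left_conv)
    then obtain h where "conv G k a (\<lambda>t. b (g \<otimes>\<^bsub>G\<^esub> t)) h \<noteq> \<zero>\<^bsub>k\<^esub>" unfolding gr_zero_def by auto
    from conv_nz[OF this a GG_D(1)[OF b]] obtain t where t: "t \<in> carrier G" "a t \<noteq> \<zero>\<^bsub>k\<^esub>"
      "b (g \<otimes>\<^bsub>G\<^esub> t) (inv\<^bsub>G\<^esub> t \<otimes>\<^bsub>G\<^esub> h) \<noteq> \<zero>\<^bsub>k\<^esub>" by blast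
    then have "b (g \<otimes>\<^bsub>G\<^esub> t) \<noteq> gr_zero G k" unfolding gr_zero_def by auto
    then have "g \<otimes>\<^bsub>G\<^esub> t \<in> suppg b" using g t unfolding suppg_def by auto
    moreover have "t \<in> supp G k a" using t unfolding supp_def by auto
    moreover have "g = (g \<otimes>\<^bsub>G\<^esub> t) \<otimes>\<^bsub>G\<^esub> inv\<^bsub>G\<^esub> t" using g t by (simp add: G.m_assoc)
    ultimately show "g \<in> (\<lambda>(s, t). s \<otimes>\<^bsub>G\<^esub> inv\<^bsub>G\<^esub> t) ` (suppg b \<times> supp G k a)" by force
  qed
  moreover have "finite ((\<lambda>(s, t). s \<otimes>\<^bsub>G\<^esub> inv\<^bsub>G\<^esub> t) ` (suppg b \<times> supp G k a))"
    using GG_D(3)[OF b] RC_D(3)[OF a] by simp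
  ultimately show "finite (suppg (act_left G k a b))" by (rule finite_subset)
qed

lemma act_right_GG:
  assumes a: "a \<in> RC" and b: "b \<in> GG"
  shows "act_right G k b a \<in> GG"
proof (rule GG_I)
  show "\<And>g. g \<in> carrier G \<Longrightarrow> act_right G k b a g \<in> RC"
    unfolding act_right_conv using a b GG_D(1) by (simp add: conv_in)
  show "\<And>g. g \<notin> carrier G \<Longrightarrow> act_right G k b a g = gr_zero G k" by (simp add: act_right_conv)
  have "suppg (act_right G k b a) \<subseteq> suppg b"
    unfolding suppg_def using a by (auto simp: act_right_conv conv_zero_l)
  then show "finite (suppg (act_right G k b a))" using GG_D(3)[OF b] by (rule finite_subset)
qed

lemma grgr_mult_GG:
  assumes c: "c \<in> GG" and b: "b \<in> GG"
  shows "grgr_mult G k b c \<in> GG"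
proof (rule GG_I)
  show "\<And>g. g \<in> carrier G \<Longrightarrow> grgr_mult G k b c g \<in> RC"
    unfolding grgr_mult_conv using c b GG_D(1) by (simp add: conv_in)
  show "\<And>g. g \<notin> carrier G \<Longrightarrow> grgr_mult G k b c g = gr_zero G k" by (simp add: grgr_mult_conv)
  have "suppg (grgr_mult G k b c) \<subseteq> suppg b"
    unfolding suppg_def using c GG_D(1)[OF c] by (auto simp: grgr_mult_conv conv_zero_l)
  then show "finite (suppg (grgr_mult G k b c))" using GG_D(3)[OF b] by (rule finite_subset)
qed

lemma D1_mult_closed: "x \<in> carrier (D1 G k) \<Longrightarrow> y \<in> carrier (D1 G k) \<Longrightarrow> x \<otimes>\<^bsub>D1 G k\<^esub> y \<in> carrier (D1 G k)"
  by (cases x, cases y) (simp add: D1_carrier D1_mult gr_mult_RC grgr_add_closed act_left_GG act_right_GG grgr_mult_GG)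


definition "xv x = (case x of None \<Rightarrow> True | Some g \<Rightarrow> g \<in> carrier G)"
definition "xact x t = map_option (\<lambda>g. g \<otimes>\<^bsub>G\<^esub> t) x"
definition "MM F1 F2 = (\<lambda>x. if xv x then conv G k (F1 x) (\<lambda>t. F2 (xact x t)) else gr_zero G k)"
definition "Cadd F1 F2 = (\<lambda>x. if xv x then gr_add G k (F1 x) (F2 x) else gr_zero G k)"
definition "Phi p = (\<lambda>x. case x of None \<Rightarrow> fst p
    | Some g \<Rightarrow> if g \<in> carrier G then gr_add G k (fst p) (snd p g) else gr_zero G k)"
definition "CC F = ((\<forall>x. F x \<in> RC) \<and> (\<forall>x. \<not> xv x \<longrightarrow> F x = gr_zero G k))"

lemma xv_act: "xv x \<Longrightarrow> t \<in> carrier G \<Longrightarrow> xv (xact x t)"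
  by (cases x) (auto simp: xv_def xact_def)

lemma xact_act: "xv x \<Longrightarrow> t \<in> carrier G \<Longrightarrow> u \<in> carrier G \<Longrightarrow> xact (xact x t) u = xact x (t \<otimes>\<^bsub>G\<^esub> u)"
  by (cases x) (auto simp: xv_def xact_def G.m_assoc)

lemma xact_one: "xv x \<Longrightarrow> xact x \<one>\<^bsub>G\<^esub> = x"
  by (cases x) (auto simp: xv_def xact_def)

lemma CC_D: "CC F \<Longrightarrow> F x \<in> RC" "CC F \<Longrightarrow> \<not> xv x \<Longrightarrow> F x = gr_zero G k"
  by (auto simp: CC_def)

lemma Phi_CC: "p \<in> carrier (D1 G k) \<Longrightarrow> CC (Phi p)"
  unfolding CC_def Phi_def D1_carrier
  by (auto simp: xv_def gr_add_closed GG_D gr_zero_RC split: option.splits)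

lemma MM_CC: "CC F1 \<Longrightarrow> CC F2 \<Longrightarrow> CC (MM F1 F2)"
  unfolding CC_def MM_def by (auto intro!: conv_in simp: gr_zero_RC)

lemma Cadd_CC: "CC F1 \<Longrightarrow> CC F2 \<Longrightarrow> CC (Cadd F1 F2)"
  unfolding CC_def Cadd_def by (auto intro!: gr_add_closed simp: gr_zero_RC)

lemma MM_assoc:
  assumes F1: "CC F1" and F2: "CC F2" and F3: "CC F3"
  shows "MM (MM F1 F2) F3 = MM F1 (MM F2 F3)"
proof
  fix x show "MM (MM F1 F2) F3 x = MM F1 (MM F2 F3) x"
  proof (cases "xv x")
    case x: True
    have "MM (MM F1 F2) F3 x = conv G k (conv G k (F1 x) (\<lambda>t. F2 (xact x t))) (\<lambda>s. F3 (xact x s))"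
      using x by (simp add: MM_def)
    also have "\<dots> = conv G k (F1 x) (\<lambda>t. conv G k (F2 (xact x t)) (\<lambda>u. F3 (xact x (t \<otimes>\<^bsub>G\<^esub> u))))"
      by (rule conv_assoc) (use F1 F2 F3 CC_D in auto)
    also have "\<dots> = conv G k (F1 x) (\<lambda>t. MM F2 F3 (xact x t))"
    proof (rule conv_cong)
      fix t s assume t: "t \<in> carrier G" and s: "s \<in> carrier G"
      have "conv G k (F2 (xact x t)) (\<lambda>u. F3 (xact x (t \<otimes>\<^bsub>G\<^esub> u)))
          = conv G k (F2 (xact x t)) (\<lambda>u. F3 (xact (xact x t) u))"
        by (rule conv_cong) (use x t F2 F3 CC_D RC_carr xact_act in auto)
      then show "conv G k (F2 (xact x t)) (\<lambda>u. F3 (xact x (t \<otimes>\<^bsub>G\<^esub> u))) s = MM F2 F3 (xact x t) s"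
        using xv_act[OF x t] by (simp add: MM_def)
      show "MM F2 F3 (xact x t) s \<in> carrier k" using MM_CC[OF F2 F3] CC_D RC_carr by blast
    qed (use F1 CC_D RC_carr in auto)
    also have "\<dots> = MM F1 (MM F2 F3) x" using x by (simp add: MM_def)
    finally show ?thesis .
  qed (simp add: MM_def)
qed

lemma MM_distl:
  assumes F1: "CC F1" and F2: "CC F2" and F3: "CC F3"
  shows "MM (Cadd F1 F2) F3 = Cadd (MM F1 F3) (MM F2 F3)"
proof
  fix x show "MM (Cadd F1 F2) F3 x = Cadd (MM F1 F3) (MM F2 F3) x"
    using F1 F2 F3 by (cases "xv x") (simp_all add: MM_def Cadd_def conv_addl CC_D)
qed

lemma MM_distr:
  assumes F1: "CC F1" and F2: "CC F2" and F3: "CC F3"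
  shows "MM F1 (Cadd F2 F3) = Cadd (MM F1 F2) (MM F1 F3)"
proof
  fix x show "MM F1 (Cadd F2 F3) x = Cadd (MM F1 F2) (MM F1 F3) x"
  proof (cases "xv x")
    case x: True
    have "conv G k (F1 x) (\<lambda>t. Cadd F2 F3 (xact x t)) = conv G k (F1 x) (\<lambda>t. gr_add G k (F2 (xact x t)) (F3 (xact x t)))"
      by (rule conv_cong) (use x F1 F2 F3 CC_D RC_carr xv_act gr_add_closed in \<open>auto simp: Cadd_def\<close>)
    also have "\<dots> = gr_add G k (conv G k (F1 x) (\<lambda>t. F2 (xact x t))) (conv G k (F1 x) (\<lambda>t. F3 (xact x t)))"
      by (rule conv_addr) (use F1 F2 F3 CC_D in auto)
    finally show ?thesis using x by (simp add: MM_def Cadd_def)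
  qed (simp add: MM_def Cadd_def)
qed

lemma gr_add_shuffle: "a \<in> RC \<Longrightarrow> b \<in> RC \<Longrightarrow> c \<in> RC \<Longrightarrow> d \<in> RC \<Longrightarrow>
  gr_add G k a (gr_add G k (gr_add G k b c) d) = gr_add G k (gr_add G k a b) (gr_add G k c d)"
  by (rule ext) (simp add: gr_add_def RC_carr R.a_ac)

lemma gr_add_shuffle2: "a \<in> RC \<Longrightarrow> b \<in> RC \<Longrightarrow> c \<in> RC \<Longrightarrow> d \<in> RC \<Longrightarrow>
  gr_add G k (gr_add G k a b) (gr_add G k c d) = gr_add G k (gr_add G k a c) (gr_add G k b d)"
  by (rule ext) (simp add: gr_add_def RC_carr R.a_ac)

lemma Phi_add:
  assumes p: "p \<in> carrier (D1 G k)" and q: "q \<in> carrier (D1 G k)"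
  shows "Phi (p \<oplus>\<^bsub>D1 G k\<^esub> q) = Cadd (Phi p) (Phi q)"
proof -
  obtain a1 b1 a2 b2 where pq: "p = (a1, b1)" "q = (a2, b2)" by (cases p, cases q)
  have c: "a1 \<in> RC" "a2 \<in> RC" "b1 \<in> GG" "b2 \<in> GG" using p q pq by (auto simp: D1_carrier)
  show ?thesis
  proof
    fix x show "Phi (p \<oplus>\<^bsub>D1 G k\<^esub> q) x = Cadd (Phi p) (Phi q) x"
      using c by (cases x) (auto simp: pq D1_add Phi_def Cadd_def xv_def grgr_add_def gr_add_shuffle2 GG_D)
  qed
qed

lemma Phi_mult:
  assumes p: "p \<in> carrier (D1 G k)" and q: "q \<in> carrier (D1 G k)"
  shows "Phi (p \<otimes>\<^bsub>D1 G k\<^esub> q) = MM (Phi p) (Phi q)"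
proof -
  obtain a1 b1 a2 b2 where pq: "p = (a1, b1)" "q = (a2, b2)" by (cases p, cases q)
  have c: "a1 \<in> RC" "a2 \<in> RC" "b1 \<in> GG" "b2 \<in> GG" using p q pq by (auto simp: D1_carrier)
  show ?thesis
  proof
    fix x show "Phi (p \<otimes>\<^bsub>D1 G k\<^esub> q) x = MM (Phi p) (Phi q) x"
    proof (cases x)
      case None
      then show ?thesis by (simp add: pq D1_mult Phi_def MM_def xv_def xact_def gr_mult_conv)
    next
      case (Some g)
      show ?thesis
      proof (cases "g \<in> carrier G")
        case g: True
        have b1g: "b1 g \<in> RC" and b2g: "\<And>t. b2 t \<in> RC" using c GG_D by auto
        have "MM (Phi p) (Phi q) x = conv G k (gr_add G k a1 (b1 g)) (\<lambda>t. Phi q (Some (g \<otimes>\<^bsub>G\<^esub> t)))"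
          using Some g by (simp add: MM_def xv_def xact_def Phi_def pq)
        also have "\<dots> = conv G k (gr_add G k a1 (b1 g)) (\<lambda>t. gr_add G k a2 (b2 (g \<otimes>\<^bsub>G\<^esub> t)))"
          by (rule conv_cong) (use g c b2g RC_carr[OF gr_add_closed[OF c(1) b1g]] RC_carr[OF gr_add_closed[OF c(2) b2g]] in \<open>auto simp: Phi_def pq\<close>)
        also have "\<dots> = gr_add G k (conv G k a1 (\<lambda>t. gr_add G k a2 (b2 (g \<otimes>\<^bsub>G\<^esub> t))))
                                   (conv G k (b1 g) (\<lambda>t. gr_add G k a2 (b2 (g \<otimes>\<^bsub>G\<^esub> t))))"
          by (rule conv_addl) (use c b1g b2g gr_add_closed in auto)
        also have "\<dots> = gr_add G k (gr_add G k (conv G k a1 (\<lambda>_. a2)) (conv G k a1 (\<lambda>t. b2 (g \<otimes>\<^bsub>G\<^esub> t))))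
                                   (gr_add G k (conv G k (b1 g) (\<lambda>_. a2)) (conv G k (b1 g) (\<lambda>t. b2 (g \<otimes>\<^bsub>G\<^esub> t))))"
          using c b1g b2g by (simp add: conv_addr)
        also have "\<dots> = Phi (p \<otimes>\<^bsub>D1 G k\<^esub> q) x"
          using Some g c b1g b2g
          by (simp add: pq D1_mult Phi_def grgr_add_def gr_mult_conv act_left_conv act_right_conv grgr_mult_conv
              gr_add_shuffle conv_in)
        finally show ?thesis ..
      next
        case False
        then show ?thesis using Some by (simp add: MM_def xv_def Phi_def)
      qed
    qed
  qed
qed

lemma Phi_inj:
  assumes p: "p \<in> carrier (D1 G k)" and q: "q \<in> carrier (D1 G k)" and e: "Phi p = Phi q"
  shows "p = q"
proof -
  obtain a1 b1 a2 b2 where pq: "p = (a1, b1)" "q = (a2, b2)" by (cases p, cases q)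
  have c: "a1 \<in> RC" "a2 \<in> RC" "b1 \<in> GG" "b2 \<in> GG" using p q pq by (auto simp: D1_carrier)
  have a: "a1 = a2" using fun_cong[OF e, of None] by (simp add: Phi_def pq)
  have "b1 g h = b2 g h" for g h
  proof (cases "g \<in> carrier G \<and> h \<in> carrier G")
    case True
    then have "gr_add G k a1 (b1 g) h = gr_add G k a1 (b2 g) h"
      using fun_cong[OF e, of "Some g"] a by (simp add: Phi_def pq)
    then have "a1 h \<oplus>\<^bsub>k\<^esub> b1 g h = a1 h \<oplus>\<^bsub>k\<^esub> b2 g h" using True by (simp add: gr_add_def)
    moreover have "a1 h \<in> carrier k" "b1 g h \<in> carrier k" "b2 g h \<in> carrier k"
      using True c GG_D(1) RC_carr by blast+
    ultimately have "\<ominus>\<^bsub>k\<^esub> a1 h \<oplus>\<^bsub>k\<^esub> a1 h \<oplus>\<^bsub>k\<^esub> b1 g h = \<ominus>\<^bsub>k\<^esub> a1 h \<oplus>\<^bsub>k\<^esub> a1 h \<oplus>\<^bsub>k\<^esub> b2 g h"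
      by (simp add: R.a_assoc)
    then show ?thesis using \<open>a1 h \<in> carrier k\<close> \<open>b1 g h \<in> carrier k\<close> \<open>b2 g h \<in> carrier k\<close>
      by (simp add: R.l_neg)
  next
    case False
    then show ?thesis using c GG_D RC_D(2) by (metis gr_zero_def)
  qed
  then show ?thesis using a pq by auto
qed

lemma Phi_one: "Phi (\<one>\<^bsub>D1 G k\<^esub>) x = (if xv x then gr_one G k else gr_zero G k)"
  by (cases x) (auto simp: Phi_def D1_one xv_def gr_add_zero gr_one_RC)

lemma MM_one_l: "CC F \<Longrightarrow> MM (Phi (\<one>\<^bsub>D1 G k\<^esub>)) F = F"
proof
  fix x assume F: "CC F"
  show "MM (Phi \<one>\<^bsub>D1 G k\<^esub>) F x = F x"
  proof (cases "xv x")
    case True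
    then show ?thesis using F conv_one_l[of "\<lambda>t. F (xact x t)"]
      by (simp add: MM_def Phi_one CC_D xact_one)
  qed (simp add: MM_def F CC_D)
qed

lemma MM_one_r: "CC F \<Longrightarrow> MM F (Phi (\<one>\<^bsub>D1 G k\<^esub>)) = F"
proof
  fix x assume F: "CC F"
  show "MM F (Phi \<one>\<^bsub>D1 G k\<^esub>) x = F x"
  proof (cases "xv x")
    case x: True
    have "conv G k (F x) (\<lambda>t. Phi \<one>\<^bsub>D1 G k\<^esub> (xact x t)) = conv G k (F x) (\<lambda>_. gr_one G k)"
      by (rule conv_cong) (use x F CC_D RC_carr xv_act in \<open>auto simp: Phi_one gr_one_def\<close>)
    then show ?thesis using x F by (simp add: MM_def conv_one_r CC_D)
  qed (simp add: MM_def F CC_D)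
qed


lemma D1_one_closed: "\<one>\<^bsub>D1 G k\<^esub> \<in> carrier (D1 G k)"
  by (simp add: D1_one D1_carrier gr_one_RC grgr_zero_GG)

lemma D1_add_closed: "x \<in> carrier (D1 G k) \<Longrightarrow> y \<in> carrier (D1 G k) \<Longrightarrow> x \<oplus>\<^bsub>D1 G k\<^esub> y \<in> carrier (D1 G k)"
  by (rule abelian_groupE(1)[OF D1_abelian])

lemma D1_ring: "ring (D1 G k)"
proof (rule ringI[OF D1_abelian])
  show "monoid (D1 G k)"
  proof (rule monoidI)
    fix x y z assume x: "x \<in> carrier (D1 G k)" and y: "y \<in> carrier (D1 G k)" and z: "z \<in> carrier (D1 G k)"
    have "Phi (x \<otimes>\<^bsub>D1 G k\<^esub> y \<otimes>\<^bsub>D1 G k\<^esub> z) = MM (MM (Phi x) (Phi y)) (Phi z)"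
      using x y z D1_mult_closed by (simp add: Phi_mult)
    also have "\<dots> = MM (Phi x) (MM (Phi y) (Phi z))"
      using x y z by (simp add: MM_assoc Phi_CC)
    also have "\<dots> = Phi (x \<otimes>\<^bsub>D1 G k\<^esub> (y \<otimes>\<^bsub>D1 G k\<^esub> z))"
      using x y z D1_mult_closed by (simp add: Phi_mult)
    finally show "x \<otimes>\<^bsub>D1 G k\<^esub> y \<otimes>\<^bsub>D1 G k\<^esub> z = x \<otimes>\<^bsub>D1 G k\<^esub> (y \<otimes>\<^bsub>D1 G k\<^esub> z)"
      using x y z D1_mult_closed by (intro Phi_inj) auto
  next
    fix x assume x: "x \<in> carrier (D1 G k)"
    have "Phi (\<one>\<^bsub>D1 G k\<^esub> \<otimes>\<^bsub>D1 G k\<^esub> x) = Phi x"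
      using x D1_one_closed by (simp add: Phi_mult MM_one_l Phi_CC)
    then show "\<one>\<^bsub>D1 G k\<^esub> \<otimes>\<^bsub>D1 G k\<^esub> x = x"
      using x D1_one_closed D1_mult_closed by (intro Phi_inj) auto
    have "Phi (x \<otimes>\<^bsub>D1 G k\<^esub> \<one>\<^bsub>D1 G k\<^esub>) = Phi x"
      using x D1_one_closed by (simp add: Phi_mult MM_one_r Phi_CC)
    then show "x \<otimes>\<^bsub>D1 G k\<^esub> \<one>\<^bsub>D1 G k\<^esub> = x"
      using x D1_one_closed D1_mult_closed by (intro Phi_inj) auto
  qed (use D1_mult_closed D1_one_closed in auto)
next
  fix x y z assume x: "x \<in> carrier (D1 G k)" and y: "y \<in> carrier (D1 G k)" and z: "z \<in> carrier (D1 G k)"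
  have "Phi ((x \<oplus>\<^bsub>D1 G k\<^esub> y) \<otimes>\<^bsub>D1 G k\<^esub> z) = Phi (x \<otimes>\<^bsub>D1 G k\<^esub> z \<oplus>\<^bsub>D1 G k\<^esub> y \<otimes>\<^bsub>D1 G k\<^esub> z)"
    using x y z D1_mult_closed D1_add_closed by (simp add: Phi_mult Phi_add MM_distl Phi_CC)
  then show "(x \<oplus>\<^bsub>D1 G k\<^esub> y) \<otimes>\<^bsub>D1 G k\<^esub> z = x \<otimes>\<^bsub>D1 G k\<^esub> z \<oplus>\<^bsub>D1 G k\<^esub> y \<otimes>\<^bsub>D1 G k\<^esub> z"
    using x y z D1_mult_closed D1_add_closed by (intro Phi_inj) auto
  have "Phi (z \<otimes>\<^bsub>D1 G k\<^esub> (x \<oplus>\<^bsub>D1 G k\<^esub> y)) = Phi (z \<otimes>\<^bsub>D1 G k\<^esub> x \<oplus>\<^bsub>D1 G k\<^esub> z \<otimes>\<^bsub>D1 G k\<^esub> y)"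
    using x y z D1_mult_closed D1_add_closed by (simp add: Phi_mult Phi_add MM_distr Phi_CC)
  then show "z \<otimes>\<^bsub>D1 G k\<^esub> (x \<oplus>\<^bsub>D1 G k\<^esub> y) = z \<otimes>\<^bsub>D1 G k\<^esub> x \<oplus>\<^bsub>D1 G k\<^esub> z \<otimes>\<^bsub>D1 G k\<^esub> y"
    using x y z D1_mult_closed D1_add_closed by (intro Phi_inj) auto
qed

end

theorem lemma5p2:
  fixes G :: "('g, 'b) monoid_scheme" and k :: "('k, 'c) ring_scheme"
  assumes "group G" and "ring k"
  shows "ring (D1 G k)
    \<and> \<one>\<^bsub>D1 G k\<^esub> = (gr_one G k, \<lambda>g. gr_zero G k)
    \<and> \<zero>\<^bsub>D1 G k\<^esub> = (gr_zero G k, \<lambda>g. gr_zero G k)"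
proof -
  interpret D1L G k by (rule D1L.intro[OF assms])
  show ?thesis using D1_ring by (simp add: D1_def)
qed

end
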